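(* Let $\mathcal{C}$ be a category, $J$ a directed partially ordered set, and let $\boldsymbol{X}=(X_\lambda,p_{\lambda\lambda'},\Lambda)$ and $\boldsymbol{Y}=(Y_\mu,q_{\mu\mu'},M)$ be inverse systems in $\mathcal{C}$ with $M$ cofinite. Then every morphism $\boldsymbol{f}=[(f,f^j_\mu)]:\boldsymbol{X}\to\boldsymbol{Y}$ of $pro^J$-$\mathcal{C}$ admits a simple representative $(f',f'^j_\mu):\boldsymbol{X}\to\boldsymbol{Y}$.
   Context: An inverse system $\boldsymbol{X}=(X_\lambda,p_{\lambda\lambda'},\Lambda)$ in $\mathcal{C}$: $\Lambda$ directed preordered, morphisms $p_{\lambda\lambda'}:X_{\lambda'}\to X_\lambda$ for $\lambda\le\lambda'$, $p_{\lambda\lambda}=1$, $p_{\lambda\lambda'}p_{\lambda'\lambda''}=p_{\lambda\lambda''}$. A directed set is cofinite if each element has finitely many predecessors. A $J$-morphism $(f,f^j_\mu):\boldsymbol{X}\to\boldsymbol{Y}$: $f:M\to\Lambda$ and $\mathcal{C}$-morphisms $f^j_\mu:X_{f(\mu)}\to Y_\mu$ ($\mu\in M$, $j\in J$) such that for all $\mu\le\mu'$ there exist $\lambda\ge f(\mu),f(\mu')$ and $j_0$ with $f^{j'}_\mu p_{f(\mu)\lambda}=q_{\mu\mu'}f^{j'}_{\mu'}p_{f(\mu')\lambda}$ for all $j'\ge j_0$. It is simple if $f$ is increasing and for every $\mu\le\mu'$ one may take $\lambda=f(\mu')$. $(f,f^j_\mu)\sim(f',f'^j_\mu)$ iff for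 every $\mu$ there exist $\lambda\ge f(\mu),f'(\mu)$ and $j_0$ with $f^{j'}_\mu p_{f(\mu)\lambda}=f'^{j'}_\mu p_{f'(\mu)\lambda}$ for all $j'\ge j_0$. $pro^J$-$\mathcal{C}$ is the category of inverse systems and $\sim$-classes of $J$-morphisms, composition $(g,g^j_\nu)(f,f^j_\mu)=(fg,g^j_\nu f^j_{g(\nu)})$. *)

theory Defs
  imports Main
begin

(* A category given by objects Ob, hom-sets Hom a b (morphisms a -> b),
   composition cmp g f  (= g o f, first f then g) and identities idm. *)
definition category ::
  "'o set \<Rightarrow> ('o \<Rightarrow> 'o \<Rightarrow> 'm set) \<Rightarrow> ('m \<Rightarrow> 'm \<Rightarrow> 'm) \<Rightarrow> ('o \<Rightarrow> 'm) \<Rightarrow> bool" where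
  "category Ob Hom cmp idm \<longleftrightarrow>
     (\<forall>a\<in>Ob. idm a \<in> Hom a a) \<and>
     (\<forall>a\<in>Ob. \<forall>b\<in>Ob. \<forall>c\<in>Ob. \<forall>f\<in>Hom a b. \<forall>g\<in>Hom b c. cmp g f \<in> Hom a c) \<and>
     (\<forall>a\<in>Ob. \<forall>b\<in>Ob. \<forall>c\<in>Ob. \<forall>d\<in>Ob. \<forall>f\<in>Hom a b. \<forall>g\<in>Hom b c. \<forall>h\<in>Hom c d.
        cmp h (cmp g f) = cmp (cmp h g) f) \<and>
     (\<forall>a\<in>Ob. \<forall>b\<in>Ob. \<forall>f\<in>Hom a b. cmp f (idm a) = f \<and> cmp (idm b) f = f)"

definition directed_preorder :: "'i set \<Rightarrow> ('i \<Rightarrow> 'i \<Rightarrow> bool) \<Rightarrow> bool" where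
  "directed_preorder I le \<longleftrightarrow>
     (\<forall>i\<in>I. le i i) \<and>
     (\<forall>i\<in>I. \<forall>j\<in>I. \<forall>k\<in>I. le i j \<longrightarrow> le j k \<longrightarrow> le i k) \<and>
     (\<forall>i\<in>I. \<forall>j\<in>I. \<exists>k\<in>I. le i k \<and> le j k)"

definition directed_poset :: "'i set \<Rightarrow> ('i \<Rightarrow> 'i \<Rightarrow> bool) \<Rightarrow> bool" where
  "directed_poset I le \<longleftrightarrow> directed_preorder I le \<and>
     (\<forall>i\<in>I. \<forall>j\<in>I. le i j \<longrightarrow> le j i \<longrightarrow> i = j)"

definition cofinite_set :: "'i set \<Rightarrow> ('i \<Rightarrow> 'i \<Rightarrow> bool) \<Rightarrow> bool" where
  "cofinite_set I le \<longleftrightarrow> (\<forall>i\<in>I. finite {k\<in>I. le k i})"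

definition inverse_system ::
  "'o set \<Rightarrow> ('o \<Rightarrow> 'o \<Rightarrow> 'm set) \<Rightarrow> ('m \<Rightarrow> 'm \<Rightarrow> 'm) \<Rightarrow> ('o \<Rightarrow> 'm) \<Rightarrow>
   'l set \<Rightarrow> ('l \<Rightarrow> 'l \<Rightarrow> bool) \<Rightarrow> ('l \<Rightarrow> 'o) \<Rightarrow> ('l \<Rightarrow> 'l \<Rightarrow> 'm) \<Rightarrow> bool" where
  "inverse_system Ob Hom cmp idm L le X p \<longleftrightarrow>
     directed_preorder L le \<and>
     (\<forall>l\<in>L. X l \<in> Ob) \<and>
     (\<forall>l\<in>L. \<forall>l'\<in>L. le l l' \<longrightarrow> p l l' \<in> Hom (X l') (X l)) \<and>
     (\<forall>l\<in>L. p l l = idm (X l)) \<and>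
     (\<forall>l\<in>L. \<forall>l'\<in>L. \<forall>l''\<in>L. le l l' \<longrightarrow> le l' l'' \<longrightarrow> cmp (p l l') (p l' l'') = p l l'')"

definition J_morphism ::
  "'o set \<Rightarrow> ('o \<Rightarrow> 'o \<Rightarrow> 'm set) \<Rightarrow> ('m \<Rightarrow> 'm \<Rightarrow> 'm) \<Rightarrow>
   'j set \<Rightarrow> ('j \<Rightarrow> 'j \<Rightarrow> bool) \<Rightarrow>
   'l set \<Rightarrow> ('l \<Rightarrow> 'l \<Rightarrow> bool) \<Rightarrow> ('l \<Rightarrow> 'o) \<Rightarrow> ('l \<Rightarrow> 'l \<Rightarrow> 'm) \<Rightarrow>
   'u set \<Rightarrow> ('u \<Rightarrow> 'u \<Rightarrow> bool) \<Rightarrow> ('u \<Rightarrow> 'o) \<Rightarrow> ('u \<Rightarrow> 'u \<Rightarrow> 'm) \<Rightarrow>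
   ('u \<Rightarrow> 'l) \<Rightarrow> ('j \<Rightarrow> 'u \<Rightarrow> 'm) \<Rightarrow> bool" where
  "J_morphism Ob Hom cmp J leJ L leL X p M leM Y q f fj \<longleftrightarrow>
     (\<forall>u\<in>M. f u \<in> L) \<and>
     (\<forall>u\<in>M. \<forall>j\<in>J. fj j u \<in> Hom (X (f u)) (Y u)) \<and>
     (\<forall>u\<in>M. \<forall>u'\<in>M. leM u u' \<longrightarrow>
        (\<exists>l\<in>L. leL (f u) l \<and> leL (f u') l \<and>
          (\<exists>j0\<in>J. \<forall>j'\<in>J. leJ j0 j' \<longrightarrow>
             cmp (fj j' u) (p (f u) l) = cmp (q u u') (cmp (fj j' u') (p (f u') l)))))"

definition simple_J_morphism ::
  "'o set \<Rightarrow> ('o \<Rightarrow> 'o \<Rightarrow> 'm set) \<Rightarrow> ('m \<Rightarrow> 'm \<Rightarrow> 'm) \<Rightarrow>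
   'j set \<Rightarrow> ('j \<Rightarrow> 'j \<Rightarrow> bool) \<Rightarrow>
   'l set \<Rightarrow> ('l \<Rightarrow> 'l \<Rightarrow> bool) \<Rightarrow> ('l \<Rightarrow> 'o) \<Rightarrow> ('l \<Rightarrow> 'l \<Rightarrow> 'm) \<Rightarrow>
   'u set \<Rightarrow> ('u \<Rightarrow> 'u \<Rightarrow> bool) \<Rightarrow> ('u \<Rightarrow> 'o) \<Rightarrow> ('u \<Rightarrow> 'u \<Rightarrow> 'm) \<Rightarrow>
   ('u \<Rightarrow> 'l) \<Rightarrow> ('j \<Rightarrow> 'u \<Rightarrow> 'm) \<Rightarrow> bool" where
  "simple_J_morphism Ob Hom cmp J leJ L leL X p M leM Y q f fj \<longleftrightarrow>
     J_morphism Ob Hom cmp J leJ L leL X p M leM Y q f fj \<and>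
     (\<forall>u\<in>M. \<forall>u'\<in>M. leM u u' \<longrightarrow> leL (f u) (f u')) \<and>
     (\<forall>u\<in>M. \<forall>u'\<in>M. leM u u' \<longrightarrow>
          (\<exists>j0\<in>J. \<forall>j'\<in>J. leJ j0 j' \<longrightarrow>
             cmp (fj j' u) (p (f u) (f u')) = cmp (q u u') (cmp (fj j' u') (p (f u') (f u')))))"

definition J_equiv ::
  "('m \<Rightarrow> 'm \<Rightarrow> 'm) \<Rightarrow> 'j set \<Rightarrow> ('j \<Rightarrow> 'j \<Rightarrow> bool) \<Rightarrow>
   'l set \<Rightarrow> ('l \<Rightarrow> 'l \<Rightarrow> bool) \<Rightarrow> ('l \<Rightarrow> 'l \<Rightarrow> 'm) \<Rightarrow> 'u set \<Rightarrow>
   ('u \<Rightarrow> 'l) \<Rightarrow> ('j \<Rightarrow> 'u \<Rightarrow> 'm) \<Rightarrow> ('u \<Rightarrow> 'l) \<Rightarrow> ('j \<Rightarrow> 'u \<Rightarrow> 'm) \<Rightarrow> bool" where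
  "J_equiv cmp J leJ L leL p M f fj g gj \<longleftrightarrow>
     (\<forall>u\<in>M. \<exists>l\<in>L. leL (f u) l \<and> leL (g u) l \<and>
        (\<exists>j0\<in>J. \<forall>j'\<in>J. leJ j0 j' \<longrightarrow> cmp (fj j' u) (p (f u) l) = cmp (gj j' u) (p (g u) l)))"

end

theory Submission imports Defs begin

lemma ub_exists:
  assumes dL: "directed_preorder L leL" and "finite S" "S \<noteq> {}" "S \<subseteq> L"
  shows "\<exists>l\<in>L. \<forall>s\<in>S. leL s l"
  using assms(2,3,4)
proof (induction S rule: finite_ne_induct)
  have reflL: "\<And>l. l\<in>L \<Longrightarrow> leL l l" using dL unfolding directed_preorder_def by blast
  case (singleton x) then show ?case using reflL by auto
next
  have transL: "\<And>a b c. a\<in>L \<Longrightarrow> b\<in>L \<Longrightarrow> c\<in>L \<Longrightarrow> leL a b \<Longrightarrow> leL b c \<Longrightarrow> leL a c"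
    using dL unfolding directed_preorder_def by blast
  have dirL: "\<And>a b. a\<in>L \<Longrightarrow> b\<in>L \<Longrightarrow> \<exists>k\<in>L. leL a k \<and> leL b k"
    using dL unfolding directed_preorder_def by blast
  case (insert x F)
  then obtain l where l: "l\<in>L" "\<forall>s\<in>F. leL s l" by auto
  obtain k where k: "k\<in>L" "leL x k" "leL l k" using dirL[of x l] insert.prems l(1) by auto
  have "\<forall>s\<in>F. leL s k"
  proof
    fix s assume "s\<in>F"
    then show "leL s k" using transL[of s l k] l k insert.prems by auto
  qed
  then show ?case using k by auto
qed

lemma dominating_map:
  assumes dM: "directed_preorder M leM" and cof: "cofinite_set M leM"
    and dL: "directed_preorder L leL"
    and hh: "\<forall>u\<in>M. finite (h u) \<and> h u \<subseteq> L \<and> h u \<noteq> {}"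
  shows "\<exists>F. \<forall>u\<in>M. F u \<in> L \<and> (\<forall>x\<in>h u. leL x (F u)) \<and> (\<forall>u'\<in>M. leM u u' \<longrightarrow> leL (F u) (F u'))"
proof -
  define D where "D u = {k\<in>M. leM k u}" for u
  define R where "R = {(k,u). k\<in>M \<and> u\<in>M \<and> leM k u \<and> \<not> leM u k}"
  define HH where "HH u = (\<Union>k\<in>D u. h k)" for u
  define ub where "ub S = (SOME l. l\<in>L \<and> (\<forall>s\<in>S. leL s l))" for S
  define G where "G = (\<lambda>F u. ub (HH u \<union> F ` {k. (k,u)\<in>R}))"
  define F where "F = wfrec R G"
  have refl: "\<And>u. u\<in>M \<Longrightarrow> leM u u" and trans: "\<And>a b c. a\<in>M \<Longrightarrow> b\<in>M \<Longrightarrow> c\<in>M \<Longrightarrow> leM a b \<Longrightarrow> leM b c \<Longrightarrow> leM a c"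
    using dM unfolding directed_preorder_def by blast+
  have finD: "\<And>u. u\<in>M \<Longrightarrow> finite (D u)" using cof unfolding cofinite_set_def D_def by blast
  have "R \<subseteq> inv_image less_than (\<lambda>u. card (D u))"
  proof
    fix x assume "x\<in>R"
    then obtain k u where x: "x=(k,u)" "k\<in>M" "u\<in>M" "leM k u" "\<not> leM u k" unfolding R_def by blast
    have "D k \<subset> D u" using x refl trans unfolding D_def by blast
    then have "card (D k) < card (D u)" using finD x(3) psubset_card_mono by blast
    then show "x \<in> inv_image less_than (\<lambda>u. card (D u))" using x by simp
  qed
  then have wfR: "wf R" using wf_subset wf_inv_image wf_less_than by blast
  have Feq: "F u = ub (HH u \<union> F ` {k. (k,u)\<in>R})" for u
  proof -
    have "F u = G (cut F R u) u" by (rule def_wfrec[OF F_def[THEN eq_reflection] wfR])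
    also have "\<dots> = ub (HH u \<union> F ` {k. (k,u)\<in>R})"
    proof -
      have "cut F R u ` {k. (k,u)\<in>R} = F ` {k. (k,u)\<in>R}"
        by (rule image_cong) (simp_all add: cut_apply)
      then show ?thesis unfolding G_def by simp
    qed
    finally show ?thesis .
  qed
  have P: "u\<in>M \<longrightarrow> F u \<in> L \<and> (\<forall>s\<in>HH u \<union> F ` {k. (k,u)\<in>R}. leL s (F u))" for u
    using wfR
  proof (induction u rule: wf_induct_rule)
    case (less u)
    show ?case
    proof
      assume uM: "u\<in>M"
      let ?S = "HH u \<union> F ` {k. (k,u)\<in>R}"
      have sub: "{k. (k,u)\<in>R} \<subseteq> D u" unfolding R_def D_def by auto
      have "finite (HH u)" unfolding HH_def using finD[OF uM] hh unfolding D_def by auto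
      moreover have "finite (F ` {k. (k,u)\<in>R})" using finite_subset[OF sub finD[OF uM]] by auto
      ultimately have fS: "finite ?S" by auto
      have "h u \<subseteq> HH u" unfolding HH_def D_def using uM refl by auto
      then have neS: "?S \<noteq> {}" using hh uM by auto
      have "HH u \<subseteq> L" unfolding HH_def D_def using hh by auto
      moreover have "F ` {k. (k,u)\<in>R} \<subseteq> L" using less unfolding R_def by auto
      ultimately have "?S \<subseteq> L" by auto
      then have "\<exists>l. l\<in>L \<and> (\<forall>s\<in>?S. leL s l)" using ub_exists[OF dL fS neS] by blast
      then have "ub ?S \<in> L \<and> (\<forall>s\<in>?S. leL s (ub ?S))" unfolding ub_def by (rule someI_ex)
      then show "F u \<in> L \<and> (\<forall>s\<in>?S. leL s (F u))" using Feq[of u] by simp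
    qed
  qed
  have Dcong: "F u = F u'" if "u\<in>M" "u'\<in>M" "D u = D u'" for u u'
  proof -
    have key: "\<And>a k. a\<in>M \<Longrightarrow> k\<in>M \<Longrightarrow> leM a k \<longleftrightarrow> D a \<subseteq> D k"
      unfolding D_def using refl trans by blast
    have "{k. (k,u)\<in>R} = {k. (k,u')\<in>R}"
    proof -
      have "(k,u)\<in>R \<longleftrightarrow> (k,u')\<in>R" for k
        using that key[of u k] key[of u' k] key[of k u] key[of k u'] unfolding R_def by auto
      then show ?thesis by auto
    qed
    moreover have "HH u = HH u'" unfolding HH_def using that by simp
    ultimately show ?thesis using Feq[of u] Feq[of u'] by simp
  qed
  show ?thesis
  proof (rule exI[of _ F], intro ballI conjI impI)
    fix u assume uM: "u\<in>M"
    show "F u \<in> L" using P uM by blast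
  next
    fix u x assume uM: "u\<in>M" and "x \<in> h u"
    then have "x \<in> HH u" unfolding HH_def D_def using uM refl by auto
    then show "leL x (F u)" using P uM by blast
  next
    fix u assume uM: "u\<in>M"
    fix u' assume u'M: "u'\<in>M" and le: "leM u u'"
    show "leL (F u) (F u')"
    proof (cases "leM u' u")
      case True
      then have "D u = D u'" unfolding D_def using le uM u'M trans by blast
      have "F u' \<in> L" using P u'M by blast
      then show ?thesis using Dcong[OF uM u'M \<open>D u = D u'\<close>] dL unfolding directed_preorder_def by simp
    next
      case False
      then have "(u,u')\<in>R" unfolding R_def using uM u'M le by auto
      then show ?thesis using P u'M by blast
    qed
  qed
qed

theorem lemma6:
  fixes Ob :: "'o set" and Hom :: "'o \<Rightarrow> 'o \<Rightarrow> 'm set"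
    and cmp :: "'m \<Rightarrow> 'm \<Rightarrow> 'm" and idm :: "'o \<Rightarrow> 'm"
    and J :: "'j set" and leJ :: "'j \<Rightarrow> 'j \<Rightarrow> bool"
    and L :: "'l set" and leL :: "'l \<Rightarrow> 'l \<Rightarrow> bool" and X :: "'l \<Rightarrow> 'o" and p :: "'l \<Rightarrow> 'l \<Rightarrow> 'm"
    and M :: "'u set" and leM :: "'u \<Rightarrow> 'u \<Rightarrow> bool" and Y :: "'u \<Rightarrow> 'o" and q :: "'u \<Rightarrow> 'u \<Rightarrow> 'm"
    and f :: "'u \<Rightarrow> 'l" and fj :: "'j \<Rightarrow> 'u \<Rightarrow> 'm"
  assumes "category Ob Hom cmp idm"
    and "directed_poset J leJ"
    and "inverse_system Ob Hom cmp idm L leL X p"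
    and "inverse_system Ob Hom cmp idm M leM Y q"
    and "cofinite_set M leM"
    and "J_morphism Ob Hom cmp J leJ L leL X p M leM Y q f fj"
  shows "\<exists>f' fj'. simple_J_morphism Ob Hom cmp J leJ L leL X p M leM Y q f' fj' \<and>
                 J_equiv cmp J leJ L leL p M f fj f' fj'"
proof -
  note cat = assms(1)[unfolded category_def]
  have cid: "\<And>a. a\<in>Ob \<Longrightarrow> idm a \<in> Hom a a" using cat by blast
  have ccomp: "\<And>a b c f g. a\<in>Ob \<Longrightarrow> b\<in>Ob \<Longrightarrow> c\<in>Ob \<Longrightarrow> f\<in>Hom a b \<Longrightarrow> g\<in>Hom b c \<Longrightarrow> cmp g f \<in> Hom a c"
    using cat by blast
  have cassoc: "\<And>a b c d f g h. a\<in>Ob \<Longrightarrow> b\<in>Ob \<Longrightarrow> c\<in>Ob \<Longrightarrow> d\<in>Ob \<Longrightarrow> f\<in>Hom a b \<Longrightarrow> g\<in>Hom b c \<Longrightarrow> h\<in>Hom c d \<Longrightarrow>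
        cmp h (cmp g f) = cmp (cmp h g) f" using cat by blast
  have cidr: "\<And>a b f. a\<in>Ob \<Longrightarrow> b\<in>Ob \<Longrightarrow> f\<in>Hom a b \<Longrightarrow> cmp f (idm a) = f" using cat by blast
  note XS = assms(3)[unfolded inverse_system_def]
  note YS = assms(4)[unfolded inverse_system_def]
  have dL: "directed_preorder L leL" and dM: "directed_preorder M leM" using XS YS by auto
  have XOb: "\<And>l. l\<in>L \<Longrightarrow> X l \<in> Ob" and YOb: "\<And>u. u\<in>M \<Longrightarrow> Y u \<in> Ob" using XS YS by auto
  have pH: "\<And>l l'. l\<in>L \<Longrightarrow> l'\<in>L \<Longrightarrow> leL l l' \<Longrightarrow> p l l' \<in> Hom (X l') (X l)" using XS by auto
  have qH: "\<And>l l'. l\<in>M \<Longrightarrow> l'\<in>M \<Longrightarrow> leM l l' \<Longrightarrow> q l l' \<in> Hom (Y l') (Y l)" using YS by auto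
  have pid: "\<And>l. l\<in>L \<Longrightarrow> p l l = idm (X l)" using XS by auto
  have pc: "\<And>l l' l''. l\<in>L \<Longrightarrow> l'\<in>L \<Longrightarrow> l''\<in>L \<Longrightarrow> leL l l' \<Longrightarrow> leL l' l'' \<Longrightarrow> cmp (p l l') (p l' l'') = p l l''"
    using XS by auto
  have reflL: "\<And>l. l\<in>L \<Longrightarrow> leL l l" and transL: "\<And>a b c. a\<in>L \<Longrightarrow> b\<in>L \<Longrightarrow> c\<in>L \<Longrightarrow> leL a b \<Longrightarrow> leL b c \<Longrightarrow> leL a c"
    using dL unfolding directed_preorder_def by blast+
  have reflM: "\<And>l. l\<in>M \<Longrightarrow> leM l l" using dM unfolding directed_preorder_def by blast
  note JM = assms(6)[unfolded J_morphism_def]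
  have fL: "\<And>u. u\<in>M \<Longrightarrow> f u \<in> L" using JM by blast
  have fjH: "\<And>u j. u\<in>M \<Longrightarrow> j\<in>J \<Longrightarrow> fj j u \<in> Hom (X (f u)) (Y u)" using JM by blast
  define W where "W u u' l \<longleftrightarrow> l\<in>L \<and> leL (f u) l \<and> leL (f u') l \<and> (\<exists>j0\<in>J. \<forall>j'\<in>J. leJ j0 j' \<longrightarrow>
             cmp (fj j' u) (p (f u) l) = cmp (q u u') (cmp (fj j' u') (p (f u') l)))" for u u' l
  define w where "w u u' = (SOME l. W u u' l)" for u u'
  have Ww: "W u u' (w u u')" if "u\<in>M" "u'\<in>M" "leM u u'" for u u'
  proof -
    have "\<exists>l. W u u' l" using JM that unfolding W_def by blast
    then show ?thesis unfolding w_def by (rule someI_ex)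
  qed
  define h where "h u = insert (f u) ((\<lambda>k. w k u) ` {k\<in>M. leM k u})" for u
  have hh: "\<forall>u\<in>M. finite (h u) \<and> h u \<subseteq> L \<and> h u \<noteq> {}"
  proof
    fix u assume uM: "u\<in>M"
    have "finite {k\<in>M. leM k u}" using assms(5) uM unfolding cofinite_set_def by blast
    moreover have "(\<lambda>k. w k u) ` {k\<in>M. leM k u} \<subseteq> L" using Ww uM unfolding W_def by blast
    ultimately show "finite (h u) \<and> h u \<subseteq> L \<and> h u \<noteq> {}" unfolding h_def using fL uM by auto
  qed
  obtain F where F: "\<forall>u\<in>M. F u \<in> L \<and> (\<forall>x\<in>h u. leL x (F u)) \<and> (\<forall>u'\<in>M. leM u u' \<longrightarrow> leL (F u) (F u'))"
    using dominating_map[OF dM assms(5) dL hh] by blast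
  have FL: "\<And>u. u\<in>M \<Longrightarrow> F u \<in> L" using F by blast
  have fF: "\<And>u. u\<in>M \<Longrightarrow> leL (f u) (F u)" using F unfolding h_def by blast
  have wF: "\<And>u u'. u\<in>M \<Longrightarrow> u'\<in>M \<Longrightarrow> leM u u' \<Longrightarrow> leL (w u u') (F u')" using F unfolding h_def by blast
  have FF: "\<And>u u'. u\<in>M \<Longrightarrow> u'\<in>M \<Longrightarrow> leM u u' \<Longrightarrow> leL (F u) (F u')" using F by blast
  define fj' where "fj' j u = cmp (fj j u) (p (f u) (F u))" for j u
  have fj'H: "\<And>u j. u\<in>M \<Longrightarrow> j\<in>J \<Longrightarrow> fj' j u \<in> Hom (X (F u)) (Y u)"
    unfolding fj'_def by (rule ccomp[OF XOb[OF FL] XOb[OF fL] YOb pH[OF fL FL fF] fjH])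
  have simp_eq: "\<exists>j0\<in>J. \<forall>j'\<in>J. leJ j0 j' \<longrightarrow>
             cmp (fj' j' u) (p (F u) (F u')) = cmp (q u u') (cmp (fj' j' u') (p (F u') (F u')))"
    if uM: "u\<in>M" and u'M: "u'\<in>M" and le: "leM u u'" for u u'
  proof -
    let ?w = "w u u'"
    have WW: "W u u' ?w" using Ww[OF that] .
    then obtain j0 where j0: "j0\<in>J" and eqw: "\<And>j'. j'\<in>J \<Longrightarrow> leJ j0 j' \<Longrightarrow>
             cmp (fj j' u) (p (f u) ?w) = cmp (q u u') (cmp (fj j' u') (p (f u') ?w))"
      unfolding W_def by blast
    have wL: "?w \<in> L" and fw: "leL (f u) ?w" and f'w: "leL (f u') ?w" using WW unfolding W_def by auto
    have wF': "leL ?w (F u')" using wF[OF that] .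
    show ?thesis
    proof (intro bexI[OF _ j0] ballI impI)
      fix j' assume j'J: "j'\<in>J" and "leJ j0 j'"
      then have E: "cmp (fj j' u) (p (f u) ?w) = cmp (q u u') (cmp (fj j' u') (p (f u') ?w))" using eqw by blast
      have obs: "X (f u) \<in> Ob" "X (F u) \<in> Ob" "X (f u') \<in> Ob" "X (F u') \<in> Ob" "X ?w \<in> Ob" "Y u \<in> Ob" "Y u' \<in> Ob"
        using XOb YOb fL FL wL uM u'M by auto
      have h1: "fj j' u \<in> Hom (X (f u)) (Y u)" "fj j' u' \<in> Hom (X (f u')) (Y u')" using fjH uM u'M j'J by auto
      have h2: "p (f u) (F u) \<in> Hom (X (F u)) (X (f u))" "p (F u) (F u') \<in> Hom (X (F u')) (X (F u))"
        "p (f u) ?w \<in> Hom (X ?w) (X (f u))" "p ?w (F u') \<in> Hom (X (F u')) (X ?w)"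
        "p (f u') ?w \<in> Hom (X ?w) (X (f u'))" "q u u' \<in> Hom (Y u') (Y u)"
        using pH qH fL FL wL uM u'M fF FF le fw f'w wF' by auto
      have pp1: "cmp (p (f u) (F u)) (p (F u) (F u')) = cmp (p (f u) ?w) (p ?w (F u'))"
        using pc[OF fL[OF uM] FL[OF uM] FL[OF u'M] fF[OF uM] FF[OF uM u'M le]] pc[OF fL[OF uM] wL FL[OF u'M] fw wF'] by simp
      have pp2: "cmp (p (f u') ?w) (p ?w (F u')) = p (f u') (F u')"
        by (rule pc[OF fL[OF u'M] wL FL[OF u'M] f'w wF'])
      have "cmp (fj' j' u) (p (F u) (F u')) = cmp (fj j' u) (cmp (p (f u) (F u)) (p (F u) (F u')))"
        unfolding fj'_def by (rule cassoc[OF obs(4) obs(2) obs(1) obs(6) h2(2) h2(1) h1(1), symmetric])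
      also have "\<dots> = cmp (fj j' u) (cmp (p (f u) ?w) (p ?w (F u')))" using pp1 by simp
      also have "\<dots> = cmp (cmp (fj j' u) (p (f u) ?w)) (p ?w (F u'))" by (rule cassoc[OF obs(4) obs(5) obs(1) obs(6) h2(4) h2(3) h1(1)])
      also have "\<dots> = cmp (cmp (q u u') (cmp (fj j' u') (p (f u') ?w))) (p ?w (F u'))" using E by simp
      also have "\<dots> = cmp (q u u') (cmp (cmp (fj j' u') (p (f u') ?w)) (p ?w (F u')))"
      proof -
        have "cmp (fj j' u') (p (f u') ?w) \<in> Hom (X ?w) (Y u')" by (rule ccomp[OF obs(5) obs(3) obs(7) h2(5) h1(2)])
        then show ?thesis by (rule cassoc[OF obs(4) obs(5) obs(7) obs(6) h2(4) _ h2(6), symmetric])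
      qed
      also have "\<dots> = cmp (q u u') (cmp (fj j' u') (p (f u') (F u')))"
        using cassoc[OF obs(4) obs(5) obs(3) obs(7) h2(4) h2(5) h1(2)] pp2 by simp
      also have "\<dots> = cmp (q u u') (cmp (fj' j' u') (p (F u') (F u')))"
      proof -
        have "fj' j' u' \<in> Hom (X (F u')) (Y u')" using fj'H u'M j'J by blast
        then have "cmp (fj' j' u') (p (F u') (F u')) = fj' j' u'" using pid[OF FL[OF u'M]] cidr[OF obs(4) obs(7)] by simp
        then show ?thesis unfolding fj'_def by simp
      qed
      finally show "cmp (fj' j' u) (p (F u) (F u')) = cmp (q u u') (cmp (fj' j' u') (p (F u') (F u')))" .
    qed
  qed
  have "simple_J_morphism Ob Hom cmp J leJ L leL X p M leM Y q F fj'"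
    unfolding simple_J_morphism_def J_morphism_def
  proof (intro conjI ballI impI)
    fix u u' assume a: "u\<in>M" "u'\<in>M" "leM u u'"
    show "\<exists>l\<in>L. leL (F u) l \<and> leL (F u') l \<and> (\<exists>j0\<in>J. \<forall>j'\<in>J. leJ j0 j' \<longrightarrow>
             cmp (fj' j' u) (p (F u) l) = cmp (q u u') (cmp (fj' j' u') (p (F u') l)))"
      using FL[OF a(2)] FF[OF a] reflL[OF FL[OF a(2)]] simp_eq[OF a] by blast
  qed (use FL fj'H FF simp_eq in auto)
  moreover have "J_equiv cmp J leJ L leL p M f fj F fj'"
    unfolding J_equiv_def
  proof
    fix u assume uM: "u\<in>M"
    obtain j0 where j0: "j0\<in>J" using Ww[OF uM uM reflM[OF uM]] unfolding W_def by blast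
    have "cmp (fj j' u) (p (f u) (F u)) = cmp (fj' j' u) (p (F u) (F u))" if "j'\<in>J" for j'
    proof -
      have "fj' j' u \<in> Hom (X (F u)) (Y u)" using fj'H uM that by blast
      then show ?thesis unfolding pid[OF FL[OF uM]] using cidr[OF XOb[OF FL[OF uM]] YOb[OF uM]] unfolding fj'_def by simp
    qed
    then show "\<exists>l\<in>L. leL (f u) l \<and> leL (F u) l \<and> (\<exists>j0\<in>J. \<forall>j'\<in>J. leJ j0 j' \<longrightarrow>
        cmp (fj j' u) (p (f u) l) = cmp (fj' j' u) (p (F u) l))"
      using FL uM fF reflL j0 by blast
  qed
  ultimately show ?thesis by blast
qed

end
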